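(* There exists a universal constant $C>0$ with the following property. For every $N$, every (deterministic) $N\times N$ hermitian matrix $H$ and every $z=E+i\eta$ with $\eta>0$, the following hold, where $\Lambda=\Lambda(z)$ and $R=R(z)$ are as defined below. If $|E|\le 2+\eta$, then \[ |\Lambda|\le C\min\Big\{\frac{|R|}{|m_{sc}^2-1|},\sqrt{|R|}\Big\}. \] For all $E\in\mathbb R$, \[ |\operatorname{Im}\Lambda|\le C\min\Big\{\frac{|R|}{|m_{sc}^2-1|},\sqrt{|R|}\Big\} \qquad\text{and}\qquad \min\big(|\Lambda|,|\Lambda+2m_{sc}+z|\big)\le C\sqrt{|R|}. \]
   Context: Resolvent and Stieltjes transforms: $G=G(z)=(H-z)^{-1}$ and $m=\frac1N\operatorname{Tr}G$. Let $\rho_{sc}(x)=\frac{1}{2\pi}\sqrt{4-x^2}$ for $|x|\le 2$ and $\rho_{sc}(x)=0$ otherwise, and $m_{sc}(z)=\int\frac{\rho_{sc}(x)}{x-z}\,dx$. Set $\Lambda=m-m_{sc}$. Minors: $G^{(j)}=(H^{(j)}-z)^{-1}$, where $H^{(j)}$ is $H$ with its $j$-th row and column removed. Column vectors: $\mathbf a_j\in\mathbb C^{N-1}$ is the $j$-th column of $H$ without its diagonal entry, indexed by $\{1,\dots,N\}\setminus\{j\}$. Thus $\mathbf a_j^*G^{(j)}\mathbf a_j=\sum_{k,l\ne j}h_{jk}G^{(j)}_{kl}h_{lj}$. $\mathbb E_j$: expectation with respect to the entries $(h_{kj})_{k\neq j}$ only, all other entries held fixed. When $H$ is deterministic, $\mathbb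 E_j$ is understood as the corresponding functional of a random Wigner matrix, i.e. $\mathbb E_j\,\mathbf a_j^*G^{(j)}\mathbf a_j=\frac1N\sum_{k\ne j}G^{(j)}_{kk}$. The error terms: set \[ \Upsilon_j=-h_{jj}-\frac{1}{G_{jj}}\frac1N\sum_kG_{jk}G_{kj}+\mathbf a_j^*G^{(j)}\mathbf a_j-\frac1N\sum_{k\ne j}G^{(j)}_{kk} \] and $R=\frac1N\sum_{j=1}^N\Upsilon_jG_{jj}$. With these definitions $\Lambda^2+(2m_{sc}+z)\Lambda+R=0$, and $\operatorname{Im}\Lambda>-\operatorname{Im}m_{sc}$. *)

theory Defs
  imports "HOL-Analysis.Analysis"
begin

text \<open>Matrices are functions nat => nat => complex; an N x N matrix uses the
indices {..<N} (i.e. 0,...,N-1 instead of 1,...,N).\<close>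

definition hermitian_mat :: "nat \<Rightarrow> (nat \<Rightarrow> nat \<Rightarrow> complex) \<Rightarrow> bool" where
  "hermitian_mat N H \<longleftrightarrow> (\<forall>i<N. \<forall>k<N. H k i = cnj (H i k))"

text \<open>Resolvent (H_I - z)^{-1} of the principal submatrix of H on the finite
index set I, as a matrix indexed by I (and zero outside I).\<close>
definition resolvent_on :: "(nat \<Rightarrow> nat \<Rightarrow> complex) \<Rightarrow> nat set \<Rightarrow> complex \<Rightarrow> (nat \<Rightarrow> nat \<Rightarrow> complex)" where
  "resolvent_on H I z = (THE G.
      (\<forall>i\<in>I. \<forall>k\<in>I. (\<Sum>l\<in>I. (H i l - (if i = l then z else 0)) * G l k) = (if i = k then 1 else 0))
    \<and> (\<forall>i k. i \<notin> I \<or> k \<notin> I \<longrightarrow> G i k = 0))"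

definition res :: "nat \<Rightarrow> (nat \<Rightarrow> nat \<Rightarrow> complex) \<Rightarrow> complex \<Rightarrow> (nat \<Rightarrow> nat \<Rightarrow> complex)" where
  "res N H z = resolvent_on H {..<N} z"

text \<open>G^{(j)}: resolvent of H with the j-th row and column removed (keeps original indices).\<close>
definition res_minor :: "nat \<Rightarrow> (nat \<Rightarrow> nat \<Rightarrow> complex) \<Rightarrow> nat \<Rightarrow> complex \<Rightarrow> (nat \<Rightarrow> nat \<Rightarrow> complex)" where
  "res_minor N H j z = resolvent_on H ({..<N} - {j}) z"

definition stieltjes :: "nat \<Rightarrow> (nat \<Rightarrow> nat \<Rightarrow> complex) \<Rightarrow> complex \<Rightarrow> complex" where
  "stieltjes N H z = (1 / of_nat N) * (\<Sum>j<N. res N H z j j)"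

definition rho_sc :: "real \<Rightarrow> real" where
  "rho_sc x = (if \<bar>x\<bar> \<le> 2 then sqrt (4 - x^2) / (2 * pi) else 0)"

definition m_sc :: "complex \<Rightarrow> complex" where
  "m_sc z = integral UNIV (\<lambda>x::real. complex_of_real (rho_sc x) / (complex_of_real x - z))"

definition Lambda :: "nat \<Rightarrow> (nat \<Rightarrow> nat \<Rightarrow> complex) \<Rightarrow> complex \<Rightarrow> complex" where
  "Lambda N H z = stieltjes N H z - m_sc z"

definition Upsilon :: "nat \<Rightarrow> (nat \<Rightarrow> nat \<Rightarrow> complex) \<Rightarrow> complex \<Rightarrow> nat \<Rightarrow> complex" where
  "Upsilon N H z j =
     - H j j
     - (1 / res N H z j j) * ((1 / of_nat N) * (\<Sum>k<N. res N H z j k * res N H z k j))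
     + (\<Sum>k\<in>{..<N} - {j}. \<Sum>l\<in>{..<N} - {j}. H j k * res_minor N H j z k l * H l j)
     - (1 / of_nat N) * (\<Sum>k\<in>{..<N} - {j}. res_minor N H j z k k)"

definition R_err :: "nat \<Rightarrow> (nat \<Rightarrow> nat \<Rightarrow> complex) \<Rightarrow> complex \<Rightarrow> complex" where
  "R_err N H z = (1 / of_nat N) * (\<Sum>j<N. Upsilon N H z j * res N H z j j)"

end

theory Submission
  imports Defs
begin
lemma Ln_arg_ok:
  fixes a v :: complex
  assumes "cmod a < 1" "cmod v = 1"
  shows "1 - a * v \<notin> nonpos_Reals" "1 - a * v \<noteq> 0"
proof -
  have "cmod (a * v) < 1" using assms by (simp add: norm_mult)
  then have "Re (a * v) < 1" using complex_Re_le_cmod[of "a * v"] by linarith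
  then have r: "Re (1 - a * v) > 0" by simp
  then show "1 - a * v \<notin> nonpos_Reals"
    by (auto simp: complex_nonpos_Reals_iff)
  show "1 - a * v \<noteq> 0"
  proof
    assume "1 - a * v = 0" then have "Re (1 - a * v) = 0" by simp
    with r show False by simp
  qed
qed

lemma div_aux: "(x::complex) * d = c \<Longrightarrow> d \<noteq> 0 \<Longrightarrow> c \<noteq> 0 \<Longrightarrow> x / c = 1 / d"
  by (simp add: field_simps)

lemma A_deriv:
  fixes \<alpha> \<beta> z :: complex and t :: real
  assumes a1: "cmod \<alpha> < 1" and ab: "\<alpha> * \<beta> = 1" and sab: "\<alpha> + \<beta> = - z" and "\<alpha> \<noteq> \<beta>"
    and den: "- 2 * cos (of_real t) - z \<noteq> 0"
  shows "((\<lambda>w. -(1/(\<alpha>-\<beta>)) * (w - \<i> * (Ln(1 - \<alpha>*exp(-(\<i>*w))) - Ln(1 - \<alpha>*exp(\<i>*w)))))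
     has_field_derivative (1 / (- 2 * cos (of_real t) - z))) (at (of_real t))"
proof -
  define u where "u = exp (\<i> * of_real t)"
  define v where "v = exp (-(\<i> * of_real t))"
  have nu: "cmod u = 1" unfolding u_def by (simp add: norm_exp_eq_Re)
  have nv: "cmod v = 1" unfolding v_def by (simp add: norm_exp_eq_Re)
  have uv: "u * v = 1" unfolding u_def v_def by (simp add: exp_minus)
  note L1 = Ln_arg_ok[OF a1 nv] and L2 = Ln_arg_ok[OF a1 nu]
  have c: "cos (of_real t) = (u + v)/2" unfolding u_def v_def by (simp add: cos_exp_eq)
  have d2: "- 2 * ((u + v)/2) - z \<noteq> 0" using den c by simp
  have b: "\<beta> = - z - \<alpha>" using sab by (simp add: algebra_simps)
  have amb: "\<alpha> - \<beta> \<noteq> 0" using assms by simp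
  have c2: "cos (complex_of_real t) = (u + v)/2" by (rule c)
  have key: "- ((1 - (inverse (1 - \<alpha> * v) * (v * \<i> * \<alpha>) + inverse (1 - \<alpha> * u) * (u * \<i> * \<alpha>)) * \<i>) / (\<alpha> - \<beta>))
     = 1 / (- (2 * ((u+v)/2)) - z)"
  proof -
    have n1: "1 - \<alpha> * v \<noteq> 0" and n2: "1 - \<alpha> * u \<noteq> 0" using L1 L2 by auto
    have e: "- (2 * ((u+v)/2)) = - u - v" "- 2 * ((u+v)/2) = - u - v" by (simp_all add: field_simps)
    have n3: "- (2 * ((u+v)/2)) - z \<noteq> 0" using d2 unfolding e .
    define p where "p = inverse (1 - \<alpha> * v)"
    define q where "q = inverse (1 - \<alpha> * u)"
    have hp: "p * (1 - \<alpha> * v) = 1" using n1 unfolding p_def by simp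
    have hq: "q * (1 - \<alpha> * u) = 1" using n2 unfolding q_def by simp
    have "- ((1 - (p * (v * \<i> * \<alpha>) + q * (u * \<i> * \<alpha>)) * \<i>)) * (- (2 * ((u+v)/2)) - z) = 1 * (\<alpha> - \<beta>)"
    proof -
      have ii: "\<i> * \<i> = -1" by simp
      have "- ((1 - (p * (v * \<i> * \<alpha>) + q * (u * \<i> * \<alpha>)) * \<i>)) * (- (u+v) - z) = 1 * (\<alpha> - \<beta>)"
        using hp hq uv ab b ii by algebra
      then show ?thesis unfolding e(1) by (simp add: algebra_simps)
    qed
    then show ?thesis unfolding p_def[symmetric] q_def[symmetric] minus_divide_left
      using n3 amb by (intro div_aux) simp_all
  qed
  show ?thesis
    using L1 L2 amb den apply (auto intro!: derivative_eq_intros has_field_derivative_Ln[THEN DERIV_chain2] simp: u_def v_def)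
    using key unfolding c2 u_def v_def by simp
qed

lemma alg1:
  fixes S C P z :: complex
  assumes "S*S = 1 - C*C" "-2*C - z \<noteq> 0" "P \<noteq> 0"
  shows "(4*S*S)/(2*P)/(-2*C-z) = (1/(2*P))*((4 - z^2)/(-2*C - z) + 2*C - z)"
proof -
  have "(1/(2*P))*((4 - z^2)/(-2*C - z) + 2*C - z) = (1/(2*P))*((4 - z^2 + (2*C - z)*(-2*C-z))/(-2*C - z))"
    using assms(2) by (simp add: field_simps)
  also have "4 - z^2 + (2*C - z)*(-2*C-z) = 4*S*S" using assms(1) unfolding power2_eq_square by algebra
  finally show ?thesis by simp
qed

lemma msc_value:
  fixes z \<alpha> :: complex
  assumes iz: "Im z > 0" and q: "\<alpha>^2 + z*\<alpha> + 1 = 0" and a1: "cmod \<alpha> < 1"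
  shows "m_sc z = \<alpha>"
proof -
  define \<beta> where "\<beta> = - z - \<alpha>"
  have sab: "\<alpha> + \<beta> = - z" unfolding \<beta>_def by simp
  have ab: "\<alpha> * \<beta> = 1" using q unfolding \<beta>_def power2_eq_square by algebra
  have anb: "\<alpha> \<noteq> \<beta>"
  proof
    assume e: "\<alpha> = \<beta>"
    then have "z = -2 * \<alpha>" using sab by simp
    moreover have "\<alpha> * \<alpha> = 1" using ab e by simp
    then have "\<alpha> = 1 \<or> \<alpha> = -1"
      by (metis (no_types, lifting) square_eq_1_iff power2_eq_square)
    ultimately have "Im z = 0" by auto
    with iz show False by simp
  qed
  define A where "A = (\<lambda>w. -(1/(\<alpha>-\<beta>)) * (w - \<i> * (Ln(1 - \<alpha>*exp(-(\<i>*w))) - Ln(1 - \<alpha>*exp(\<i>*w)))))"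
  define Phi where "Phi = (\<lambda>w. (1/(2*pi)) * ((4 - z^2) * A w + 2 * sin w - z * w))"
  define D where "D = (\<lambda>t::real. (1/(2*pi)) * ((4 - z^2) / (- 2 * cos (of_real t) - z) + 2 * cos (of_real t) - z))"
  have den: "- 2 * cos (complex_of_real t) - z \<noteq> 0" for t
  proof
    assume "- 2 * cos (complex_of_real t) - z = 0"
    then have "Im (- 2 * cos (complex_of_real t) - z) = 0" by simp
    then show False using iz by (simp add: cos_of_real)
  qed
  have dPhi: "(Phi has_field_derivative D t) (at (of_real t))" for t
  proof -
    have dA: "(A has_field_derivative (1 / (- 2 * cos (of_real t) - z))) (at (of_real t))"
      unfolding A_def by (rule A_deriv[OF a1 ab sab anb den])
    have "((\<lambda>w. (4 - z^2) * A w + 2 * sin w - z * w) has_field_derivative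
        ((4 - z^2) * (1 / (- 2 * cos (of_real t) - z)) + 2 * cos (of_real t) - z)) (at (of_real t))"
      by (auto intro!: derivative_eq_intros dA)
    then have "((\<lambda>w. (1/(2*pi)) * ((4 - z^2) * A w + 2 * sin w - z * w)) has_field_derivative
        (1/(2*pi)) * ((4 - z^2) * (1 / (- 2 * cos (of_real t) - z)) + 2 * cos (of_real t) - z)) (at (of_real t))"
      by (rule DERIV_cmult)
    then show ?thesis unfolding Phi_def D_def by simp
  qed
  have ftc: "(D has_integral (Phi (of_real pi) - Phi (of_real 0))) {0..pi}"
    using fundamental_theorem_of_calculus[of 0 pi "\<lambda>x. Phi (of_real x)" D]
      has_vector_derivative_real_field[OF dPhi] by simp
  have val: "Phi (of_real pi) - Phi (of_real 0) = \<alpha>"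
  proof -
    have "A (of_real pi) = - (of_real pi / (\<alpha> - \<beta>))"
      unfolding A_def by (simp add: exp_minus)
    moreover have "A 0 = 0" unfolding A_def by simp
    ultimately have "Phi (of_real pi) - Phi (of_real 0) = (1/(2*pi)) * ((4 - z^2) * (- (of_real pi / (\<alpha> - \<beta>))) - z * of_real pi)"
      unfolding Phi_def by simp
    also have "\<dots> = ((z^2 - 4) / (\<alpha> - \<beta>) - z) / 2"
      using anb by (simp add: field_simps)
    also have "z^2 - 4 = (\<alpha> - \<beta>) * (\<alpha> - \<beta>)"
    proof -
      have "z = -(\<alpha>+\<beta>)" using sab by simp
      then show ?thesis using ab unfolding power2_eq_square by algebra
    qed
    finally have "Phi (of_real pi) - Phi (of_real 0) = ((\<alpha> - \<beta>) * (\<alpha> - \<beta>) / (\<alpha> - \<beta>) - z) / 2" .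
    moreover have "(\<alpha> - \<beta>) * (\<alpha> - \<beta>) / (\<alpha> - \<beta>) = \<alpha> - \<beta>" using anb by simp
    moreover have "z = - \<alpha> - \<beta>" using sab by (metis add.commute add_uminus_conv_diff minus_add_distrib minus_minus)
    ultimately show ?thesis by simp
  qed
  define f where "f = (\<lambda>x::real. complex_of_real (sqrt (4 - x^2) / (2 * pi)) / (complex_of_real x - z))"
  have dz: "complex_of_real x - z \<noteq> 0" for x
  proof
    assume "complex_of_real x - z = 0" then have "Im (complex_of_real x - z) = 0" by simp
    with iz show False by simp
  qed
  have fc: "continuous_on {-2..2} f" unfolding f_def
    by (intro continuous_intros) (use dz in auto)
  have sub: "((\<lambda>t. (2 * sin t) *\<^sub>R f (- 2 * cos t)) has_integral integral {-2..2} f) {0..pi}"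
  proof -
    have "((\<lambda>t. (2 * sin t) *\<^sub>R f (- 2 * cos t)) has_integral integral {(- 2 * cos 0)..(-2 * cos pi)} f) {0..pi}"
      by (rule has_integral_substitution[of 0 pi "\<lambda>t. - 2 * cos t" "-2" 2 f])
         (auto intro!: derivative_eq_intros fc simp: cos_ge_minus_one, smt (verit) cos_ge_minus_one)
    then show ?thesis by simp
  qed
  have pw: "(2 * sin t) *\<^sub>R f (- 2 * cos t) = D t" if "t \<in> {0..pi}" for t
  proof -
    have s0: "sin t \<ge> 0" using that by (auto intro: sin_ge_zero)
    have "4 - (- 2 * cos t)^2 = (2 * sin t)^2"
      using sin_cos_squared_add[of t] unfolding power2_eq_square by algebra
    then have sq: "sqrt (4 - (- 2 * cos t)^2) = 2 * sin t" using s0 by (metis real_sqrt_abs abs_of_nonneg mult_nonneg_nonneg zero_le_numeral)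
    have dd: "- 2 * complex_of_real (cos t) - z \<noteq> 0" using den[of t] by (simp add: cos_of_real)
    have ss: "complex_of_real (sin t)^2 = 1 - complex_of_real (cos t)^2"
      using sin_squared_eq[of t] by (metis of_real_1 of_real_diff of_real_power)
    have L: "(2 * sin t) *\<^sub>R f (- 2 * cos t) = (4 * complex_of_real (sin t) * complex_of_real (sin t)) / (2 * complex_of_real pi) / (- 2 * complex_of_real (cos t) - z)"
      unfolding f_def sq by (simp add: scaleR_conv_of_real)
    have R: "D t = (1/(2*complex_of_real pi)) * ((4 - z^2) / (- 2 * complex_of_real (cos t) - z) + 2 * complex_of_real (cos t) - z)"
      unfolding D_def cos_of_real by simp
    show ?thesis unfolding L R
      by (rule alg1) (use dd ss in \<open>auto simp: power2_eq_square\<close>)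
  qed
  have "(D has_integral integral {-2..2} f) {0..pi}"
    using sub has_integral_spike_finite_eq[of "{}"] pw
    by (metis (no_types, lifting) has_integral_cong)
  then have I: "integral {-2..2} f = \<alpha>" using ftc val has_integral_unique by metis
  have "(f has_integral \<alpha>) {-2..2}"
    using integrable_continuous_real[OF fc] I by (metis has_integral_integral)
  then have "((\<lambda>x. if x \<in> {-2..2} then f x else 0) has_integral \<alpha>) UNIV"
    by (simp only: has_integral_restrict_UNIV)
  moreover have "(\<lambda>x. if x \<in> {-2..2} then f x else 0) = (\<lambda>x::real. complex_of_real (rho_sc x) / (complex_of_real x - z))"
    by (auto simp: f_def rho_sc_def abs_le_iff)
  ultimately show ?thesis unfolding m_sc_def by (simp add: integral_unique)
qed

lemma K3_real:
  fixes a y \<rho> :: real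
  assumes a0: "a \<ge> 0" and y0: "y > 0" and rho: "\<rho> = a^2 + y^2" and r1: "\<rho> < 1"
    and cond: "a*(1+\<rho>) \<le> 2*\<rho> + y*(1-\<rho>)"
  shows "a*(1-\<rho>) \<le> 6*y"
proof -
  define r where "r = sqrt \<rho>"
  have rho0: "\<rho> > 0" using rho y0 by (simp add: add_nonneg_pos)
  have r0: "r > 0" unfolding r_def using rho0 by simp
  have rr: "r^2 = \<rho>" unfolding r_def using rho0 by simp
  have rlt: "r < 1" unfolding r_def using r1 rho0 by simp
  define c where "c = a / r"
  define \<sigma> where "\<sigma> = y / r"
  have a_eq: "a = c * r" and y_eq: "y = \<sigma> * r" unfolding c_def \<sigma>_def using r0 by auto
  have aay: "a*a + y*y > 0" using rho0 rho by (simp add: power2_eq_square)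
  have cs: "c^2 + \<sigma>^2 = 1"
  proof -
    have "c^2 + \<sigma>^2 = (a^2 + y^2)/r^2" unfolding c_def \<sigma>_def by (simp add: power_divide add_divide_distrib)
    also have "\<dots> = 1" using rr rho rho0 y0 by simp
    finally show ?thesis .
  qed
  have c0: "c \<ge> 0" unfolding c_def using a0 r0 by simp
  have s0: "\<sigma> > 0" unfolding \<sigma>_def using y0 r0 by simp
  have c2: "c^2 \<le> 1" using cs by (smt (verit) zero_le_power2)
  have c1: "c \<le> 1" using c2 c0 by (simp add: abs_square_le_1)
  have cc: "c \<ge> 1 - \<sigma>^2"
  proof -
    have "c*c \<le> c*1" using mult_left_mono[OF c1 c0] .
    then have "c^2 \<le> c" by (simp add: power2_eq_square)
    then show ?thesis using cs by simp
  qed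
  have cond2: "c*(1+r^2) \<le> 2*r + \<sigma>*(1-r^2)"
  proof -
    have "r * (c*(1+r^2)) \<le> r * (2*r + \<sigma>*(1-r^2))"
      using cond unfolding a_eq y_eq rr[symmetric] by (simp add: power2_eq_square algebra_simps)
    then show ?thesis using r0 by simp
  qed
  have "(1-\<sigma>^2)*(1+r^2) \<le> c*(1+r^2)" using cc by (simp add: mult_right_mono)
  then have st: "(1-r)^2 \<le> \<sigma>^2*(1+r^2) + \<sigma>*(1-r^2)" using cond2
    by (simp add: power2_eq_square algebra_simps)
  have "\<sigma>^2*(1+r^2) \<le> \<sigma>^2 * 2" using rlt r0
    by (intro mult_left_mono) (auto simp: power2_eq_square mult_le_one)
  moreover have "\<sigma>*(1-r^2) \<le> \<sigma>*(2*(1-r))"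
  proof (intro mult_left_mono)
    have "0 \<le> (1-r)*(1-r)" by simp
    then show "1 - r^2 \<le> 2*(1-r)" by (simp add: power2_eq_square algebra_simps)
  qed (use s0 in auto)
  ultimately have st2: "(1-r)^2 \<le> 2*\<sigma>^2 + 2*\<sigma>*(1-r)" using st by (simp add: algebra_simps)
  have A: "1 - r \<le> 3*\<sigma>"
  proof (rule ccontr)
    define p where "p = 1 - r"
    assume "\<not> 1 - r \<le> 3*\<sigma>"
    then have h: "p > 3*\<sigma>" unfolding p_def by simp
    then have "(3*\<sigma>)*p < p*p" using s0 by (intro mult_strict_right_mono) auto
    then have f1: "3*(\<sigma>*p) < p*p" by (metis mult.assoc)
    have "(3*\<sigma>)*(3*\<sigma>) < (3*\<sigma>)*p" using h s0 by (intro mult_strict_left_mono) auto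
    then have f2: "9*(\<sigma>*\<sigma>) < 3*(\<sigma>*p)" by (simp add: algebra_simps)
    have f3: "p*p \<le> 2*(\<sigma>*\<sigma>) + 2*(\<sigma>*p)" using st2 unfolding p_def by (simp add: power2_eq_square)
    have f4: "\<sigma>*\<sigma> > 0" using s0 by simp
    from f1 f2 f3 f4 show False by linarith
  qed
  have "a*(1-\<rho>) = a*((1-r)*(1+r))" using rr by (simp add: power2_eq_square algebra_simps)
  also have "\<dots> \<le> r*((1-r)*2)" using a0 rlt r0 c1
  proof (intro mult_mono)
    show "a \<le> r" unfolding a_eq using c1 r0 by (simp add: mult_le_one)
  qed (use rlt r0 in auto)
  also have "\<dots> \<le> r*(3*\<sigma>*2)" using A r0 by (intro mult_left_mono) auto
  also have "\<dots> = 6*y" using y_eq by simp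
  finally show ?thesis .
qed

lemma le_min_aux: "x \<le> c * a \<Longrightarrow> x \<le> c * b \<Longrightarrow> x \<le> c * min a b" for x c a b :: real
  by (simp add: min_def)

lemma sqrt_aux: "(x::real) \<ge> 0 \<Longrightarrow> x * x \<le> 64 * y \<Longrightarrow> x \<le> 8 * sqrt y"
proof -
  assume x0: "x \<ge> 0" and h: "x * x \<le> 64 * y"
  have "x = sqrt (x*x)" using x0 by simp
  also have "\<dots> \<le> sqrt (64 * y)" using h by (rule real_sqrt_le_mono)
  also have "\<dots> = 8 * sqrt y" by (simp add: real_sqrt_mult)
  finally show ?thesis .
qed

lemma final_ineq:
  fixes s z m :: complex
  assumes iz: "Im z > 0" and qs: "s^2 + z * s + 1 = 0" and s1: "cmod s < 1" and ims: "Im s > 0"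
    and imm: "Im m > 0"
  shows "(\<bar>Re z\<bar> \<le> 2 + Im z \<longrightarrow> cmod (m - s) \<le> 8 * min (cmod (-(m^2 + z * m + 1)) / cmod (s^2 - 1)) (sqrt (cmod (-(m^2 + z * m + 1)))))
    \<and> \<bar>Im (m - s)\<bar> \<le> 8 * min (cmod (-(m^2 + z * m + 1)) / cmod (s^2 - 1)) (sqrt (cmod (-(m^2 + z * m + 1))))
    \<and> min (cmod (m - s)) (cmod (m - s + 2 * s + z)) \<le> 8 * sqrt (cmod (-(m^2 + z * m + 1)))"
proof -
  define L where "L = m - s"
  define b where "b = 2 * s + z"
  define t where "t = - z - s"
  have st: "s * t = 1" unfolding t_def using qs unfolding power2_eq_square by algebra
  have s0: "s \<noteq> 0" using st by auto
  have tinv: "t = 1 / s" using st s0 by (simp add: field_simps)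
  have Lb: "L + b = m - t" unfolding L_def b_def t_def by simp
  have Req: "-(m^2 + z * m + 1) = - (L * (L + b))" unfolding L_def b_def using qs
    unfolding power2_eq_square by algebra
  have s2: "s^2 - 1 = s * b" unfolding b_def using qs unfolding power2_eq_square by algebra
  define \<rho> where "\<rho> = (cmod s)^2"
  have rho0: "\<rho> > 0" unfolding \<rho>_def using s0 by simp
  have rho1: "\<rho> < 1" unfolding \<rho>_def using s1 by (simp add: power_less_one_iff abs_square_less_1)
  have rho_eq: "\<rho> = (Re s)^2 + (Im s)^2" unfolding \<rho>_def by (rule cmod_power2)
  have Ret: "Re t = Re s / \<rho>" unfolding tinv \<rho>_def by (simp add: Re_divide')
  have Imt: "Im t = - Im s / \<rho>" unfolding tinv \<rho>_def by (simp add: Im_divide')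
  define q where "q = Im s / \<rho>"
  have q0: "q > 0" unfolding q_def using ims rho0 by simp
  have qs_ge: "q \<ge> Im s" unfolding q_def using ims rho0 rho1 by (simp add: field_simps)
  have b0: "b \<noteq> 0"
  proof
    assume "b = 0"
    then have "s^2 = 1" using s2 by simp
    then have "cmod s * cmod s = 1" by (metis norm_one norm_power power2_eq_square)
    moreover have "cmod s * cmod s < 1" using s1 mult_left_le[of "cmod s" "cmod s"] by simp
    ultimately show False by simp
  qed
  define l where "l = cmod L"
  define lb where "lb = cmod (L + b)"
  define nb where "nb = cmod b"
  define ns where "ns = cmod s"
  define iL where "iL = \<bar>Im L\<bar>"
  have l0: "l \<ge> 0" and lb0: "lb \<ge> 0" and nb0: "nb > 0" and ns0: "ns > 0" and ns1: "ns < 1"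
    unfolding l_def lb_def nb_def ns_def using b0 s0 s1 by auto
  have cR: "cmod (-(m^2 + z * m + 1)) = l * lb" unfolding Req l_def lb_def by (simp add: norm_mult)
  have c2: "cmod (s^2 - 1) = ns * nb" unfolding s2 ns_def nb_def by (simp add: norm_mult)
  have K1: "lb \<ge> q"
  proof -
    have "Im (L + b) = Im m + q" unfolding Lb using Imt q_def by simp
    then have "Im (L + b) \<ge> q" using imm by simp
    then show ?thesis unfolding lb_def using abs_Im_le_cmod[of "L+b"] by linarith
  qed
  have K2: "iL \<le> lb"
  proof -
    have "Im (L + b) = Im m + q" unfolding Lb using Imt q_def by simp
    moreover have "Im (L + b) \<le> lb" unfolding lb_def using abs_Im_le_cmod[of "L+b"] by linarith
    moreover have "Im L = Im m - Im s" unfolding L_def by simp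
    ultimately show ?thesis unfolding iL_def using imm ims qs_ge by linarith
  qed
  have iLl: "iL \<le> l" unfolding iL_def l_def by (rule abs_Im_le_cmod)
  have tri: "nb \<le> l + lb"
  proof -
    have "cmod b \<le> cmod (L + b) + cmod L" using norm_triangle_ineq4[of "L+b" L] by simp
    then show ?thesis unfolding nb_def l_def lb_def by simp
  qed
  have tri2: "l \<le> lb + nb"
  proof -
    have "cmod L \<le> cmod (L + b) + cmod b" using norm_triangle_ineq4[of "L+b" b] by simp
    then show ?thesis unfolding nb_def l_def lb_def by simp
  qed
  have c2pos: "ns * nb > 0" using ns0 nb0 by simp
  have c2le: "ns * nb \<le> nb" using ns1 nb0 by simp
  have C3: "min l lb \<le> 8 * sqrt (l * lb)"
  proof (rule sqrt_aux)
    show "min l lb \<ge> 0" using l0 lb0 by simp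
    have "min l lb * min l lb \<le> l * lb" using l0 lb0
      by (simp add: min_def mult_mono mult_left_mono mult_right_mono)
    then show "min l lb * min l lb \<le> 64 * (l * lb)" using l0 lb0 by (smt (verit) mult_nonneg_nonneg)
  qed
  have C2a: "iL * (ns * nb) \<le> 2 * (l * lb)"
  proof (cases "lb \<ge> nb / 2")
    case True
    have h1: "ns * nb \<le> 2 * lb" using c2le True by simp
    have "iL * (ns * nb) \<le> l * (2 * lb)"
      using mult_mono[OF iLl h1] l0 c2pos by (simp add: iL_def)
    then show ?thesis by simp
  next
    case False
    then have "l \<ge> nb / 2" using tri by simp
    have h1: "ns * nb \<le> 2 * l" using c2le \<open>l \<ge> nb/2\<close> by simp
    have "iL * (ns * nb) \<le> lb * (2 * l)"
      using mult_mono[OF K2 h1] lb0 c2pos by (simp add: iL_def)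
    then show ?thesis by (simp add: algebra_simps)
  qed
  have C2: "iL \<le> 8 * min (l * lb / (ns * nb)) (sqrt (l * lb))"
  proof (rule le_min_aux)
    have "iL \<le> 2 * (l * lb) / (ns * nb)" using C2a c2pos by (simp add: field_simps)
    also have "\<dots> \<le> 8 * (l * lb) / (ns * nb)" using c2pos l0 lb0
      by (intro divide_right_mono) auto
    finally show "iL \<le> 8 * (l * lb / (ns * nb))" by simp
    show "iL \<le> 8 * sqrt (l * lb)"
    proof (rule sqrt_aux)
      show "iL \<ge> 0" unfolding iL_def by simp
      have "iL * iL \<le> l * lb" using mult_mono[OF iLl K2] l0 by (simp add: iL_def)
      then show "iL * iL \<le> 64 * (l * lb)" using l0 lb0 by (smt (verit) mult_nonneg_nonneg)
    qed
  qed
  have C1: "l \<le> 8 * min (l * lb / (ns * nb)) (sqrt (l * lb))" if cond: "\<bar>Re z\<bar> \<le> 2 + Im z"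
  proof -
    have K3: "nb \<le> 7 * q"
    proof -
      define x where "x = Re s"
      define y where "y = Im s"
      have zeq: "z = - s - t" unfolding t_def by simp
      have Rez: "Re z = - x * (1 + 1/\<rho>)" unfolding zeq x_def using Ret by (simp add: algebra_simps)
      have Imz: "Im z = y * (1/\<rho> - 1)" unfolding zeq y_def using Imt by (simp add: algebra_simps)
      have "\<bar>x\<bar> * (1 + 1/\<rho>) \<le> 2 + y * (1/\<rho> - 1)" using cond unfolding Rez Imz
        using rho0 by (simp add: abs_mult)
      then have "\<rho> * (\<bar>x\<bar> * (1 + 1/\<rho>)) \<le> \<rho> * (2 + y * (1/\<rho> - 1))" using rho0
        by (intro mult_left_mono) auto
      moreover have "\<rho> * (\<bar>x\<bar> * (1 + 1/\<rho>)) = \<bar>x\<bar> * (1 + \<rho>)" using rho0 by (simp add: field_simps)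
      moreover have "\<rho> * (2 + y * (1/\<rho> - 1)) = 2 * \<rho> + y * (1 - \<rho>)" using rho0 by (simp add: field_simps)
      ultimately have cnd: "\<bar>x\<bar> * (1 + \<rho>) \<le> 2 * \<rho> + y * (1 - \<rho>)" by simp
      have k: "\<bar>x\<bar> * (1 - \<rho>) \<le> 6 * y"
        by (rule K3_real[OF _ _ _ rho1 cnd]) (use ims rho_eq in \<open>auto simp: x_def y_def\<close>)
      have Reb: "Re b = x * (1 - 1/\<rho>)" unfolding b_def zeq x_def using Ret by (simp add: algebra_simps)
      have Imb: "Im b = y * (1 + 1/\<rho>)" unfolding b_def zeq y_def using Imt by (simp add: algebra_simps)
      have "(Re b * \<rho>)^2 \<le> 36 * y^2"
      proof -
        have "Re b * \<rho> = - (x * (1 - \<rho>))" unfolding Reb using rho0 by (simp add: field_simps)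
        then have "\<bar>Re b * \<rho>\<bar> \<le> 6 * y" using k rho1 by (simp add: abs_mult)
        moreover have "\<bar>6*y\<bar> = 6*y" using ims unfolding y_def by simp
        ultimately have "\<bar>Re b * \<rho>\<bar> \<le> \<bar>6*y\<bar>" by simp
        then have "(Re b * \<rho>)^2 \<le> (6*y)^2" by (simp only: abs_le_square_iff)
        then show ?thesis by (simp add: power2_eq_square)
      qed
      moreover have "(Im b * \<rho>)^2 \<le> 4 * y^2"
      proof -
        have "Im b * \<rho> = y * (1 + \<rho>)" unfolding Imb using rho0 by (simp add: field_simps)
        moreover have h0: "0 \<le> y * (1 + \<rho>)" and h1: "y * (1 + \<rho>) \<le> 2 * y" using ims rho1 rho0 unfolding y_def by auto
        ultimately have "(Im b * \<rho>)^2 \<le> (2*y)^2" using power_mono[OF h1 h0, of 2] by simp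
        then show ?thesis by (simp add: power_mult_distrib)
      qed
      moreover have "(nb * \<rho>)^2 = (Re b * \<rho>)^2 + (Im b * \<rho>)^2" unfolding nb_def
        by (simp add: power_mult_distrib cmod_power2 algebra_simps)
      moreover have "(7 * y)^2 = 49 * y^2" by (simp add: power_mult_distrib)
      moreover have "y^2 \<ge> 0" by simp
      ultimately have "(nb * \<rho>)^2 \<le> (7 * y)^2" by linarith
      then have "nb * \<rho> \<le> 7 * y"
        by (rule power2_le_imp_le) (use ims in \<open>simp add: y_def\<close>)
      then show ?thesis unfolding q_def y_def using rho0 by (simp add: field_simps)
    qed
    have nblb: "nb \<le> 7 * lb" using K3 K1 by simp
    show ?thesis
    proof (rule le_min_aux)
      have "l * (ns * nb) \<le> l * (7 * lb)" using c2le nblb l0 by (intro mult_left_mono) auto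
      then have "l \<le> 7 * (l * lb) / (ns * nb)" using c2pos by (simp add: field_simps)
      also have "\<dots> \<le> 8 * (l * lb) / (ns * nb)" using c2pos l0 lb0
        by (intro divide_right_mono) auto
      finally show "l \<le> 8 * (l * lb / (ns * nb))" by simp
      show "l \<le> 8 * sqrt (l * lb)"
      proof (rule sqrt_aux)
        show "l \<ge> 0" by (rule l0)
        have h8: "l \<le> 8 * lb" using tri2 nblb by simp
        have A: "l * l \<le> l * (8 * lb)" using mult_left_mono[OF h8 l0] .
        have B: "l * (8 * lb) = 8 * (l * lb)" by simp
        have C: "0 \<le> l * lb" using l0 lb0 by simp
        from A B C show "l * l \<le> 64 * (l * lb)" by linarith
      qed
    qed
  qed
  have LL: "m - s + 2 * s + z = L + b" unfolding L_def b_def by simp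
  show ?thesis unfolding cR c2 LL unfolding L_def[symmetric] l_def[symmetric] lb_def[symmetric]
    using C1 C2 C3 unfolding iL_def l_def by auto
qed

lemma quad_root:
  fixes z :: complex
  assumes iz: "Im z > 0"
  shows "\<exists>\<alpha>. \<alpha>^2 + z * \<alpha> + 1 = 0 \<and> cmod \<alpha> < 1"
proof -
  define s where "s = csqrt (z^2 - 4)"
  have ss: "s^2 = z^2 - 4" unfolding s_def by simp
  define a1 where "a1 = (- z + s) / 2"
  define a2 where "a2 = (- z - s) / 2"
  have q1: "a1^2 + z * a1 + 1 = 0" unfolding a1_def using ss unfolding power2_eq_square
    by (simp add: field_simps) algebra
  have q2: "a2^2 + z * a2 + 1 = 0" unfolding a2_def using ss unfolding power2_eq_square
    by (simp add: field_simps)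
  have p: "a1 * a2 = 1" unfolding a1_def a2_def using ss unfolding power2_eq_square
    by (simp add: field_simps)
  have sm: "a1 + a2 = - z" unfolding a1_def a2_def by (simp add: field_simps)
  show ?thesis
  proof (cases "cmod a1 < 1")
    case True then show ?thesis using q1 by blast
  next
    case False
    show ?thesis
    proof (cases "cmod a2 < 1")
      case True then show ?thesis using q2 by blast
    next
      case False2: False
      have "cmod a1 * cmod a2 = 1" using p by (metis norm_mult norm_one)
      moreover have "cmod a1 * 1 \<le> cmod a1 * cmod a2" using False2 by (intro mult_left_mono) auto
      ultimately have n1: "cmod a1 = 1" using False by simp
      have "a1 * cnj a1 = 1" using complex_norm_square[of a1] n1 by simp
      then have "a1 * cnj a1 = a1 * a2" using p by simp
      moreover have "a1 \<noteq> 0" using n1 by auto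
      ultimately have "a2 = cnj a1" by simp
      then have "Im (a1 + a2) = 0" by simp
      then show ?thesis using sm iz by simp
    qed
  qed
qed

lemma msc_props:
  fixes z :: complex
  assumes iz: "Im z > 0"
  shows "(m_sc z)^2 + z * m_sc z + 1 = 0" "cmod (m_sc z) < 1" "Im (m_sc z) > 0"
proof -
  obtain a where q: "a^2 + z * a + 1 = 0" and a1: "cmod a < 1" using quad_root[OF iz] by blast
  have e: "m_sc z = a" by (rule msc_value[OF iz q a1])
  show "(m_sc z)^2 + z * m_sc z + 1 = 0" "cmod (m_sc z) < 1" using q a1 e by auto
  have a0: "a \<noteq> 0" using q by auto
  have "z = - a - 1 / a" using q a0 by (simp add: field_simps power2_eq_square) algebra
  then have "Im z = - Im a + Im a / (cmod a)^2" by (simp add: Im_divide')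
  moreover have "(cmod a)^2 < 1" using a1 by (simp add: abs_square_less_1)
  moreover have "(cmod a)^2 > 0" using a0 by simp
  ultimately have "Im a * (1 / (cmod a)^2 - 1) > 0" using iz by (simp add: algebra_simps)
  moreover have "1 / (cmod a)^2 - 1 > 0" using \<open>(cmod a)^2 < 1\<close> \<open>(cmod a)^2 > 0\<close> by (simp add: field_simps)
  ultimately have "Im a > 0" by (simp add: zero_less_mult_iff)
  then show "Im (m_sc z) > 0" using e by simp
qed

definition isres :: "(nat \<Rightarrow> nat \<Rightarrow> complex) \<Rightarrow> nat set \<Rightarrow> complex \<Rightarrow> (nat \<Rightarrow> nat \<Rightarrow> complex) \<Rightarrow> bool" where
  "isres H I z G \<longleftrightarrow> (\<forall>i\<in>I. \<forall>k\<in>I. (\<Sum>l\<in>I. (H i l - (if i = l then z else 0)) * G l k) = (if i = k then 1 else 0))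
    \<and> (\<forall>i k. i \<notin> I \<or> k \<notin> I \<longrightarrow> G i k = 0)"

definition herm_on :: "(nat \<Rightarrow> nat \<Rightarrow> complex) \<Rightarrow> nat set \<Rightarrow> bool" where
  "herm_on H I \<longleftrightarrow> (\<forall>i\<in>I. \<forall>k\<in>I. H k i = cnj (H i k))"

lemma resolvent_on_isres: "resolvent_on H I z = (THE G. isres H I z G)"
  unfolding resolvent_on_def isres_def ..

lemma herm_cnj: "herm_on H I \<Longrightarrow> i \<in> I \<Longrightarrow> l \<in> I \<Longrightarrow> cnj (H i l) = H l i"
  unfolding herm_on_def by (metis complex_cnj_cnj)

lemma quad_real:
  assumes "herm_on H I"
  shows "Im (\<Sum>i\<in>I. \<Sum>l\<in>I. cnj (w i) * (H i l * w l)) = 0"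
proof -
  define Q where "Q = (\<Sum>i\<in>I. \<Sum>l\<in>I. cnj (w i) * (H i l * w l))"
  have "cnj Q = (\<Sum>i\<in>I. \<Sum>l\<in>I. w i * (cnj (H i l) * cnj (w l)))" unfolding Q_def by simp
  also have "\<dots> = (\<Sum>i\<in>I. \<Sum>l\<in>I. cnj (w l) * (H l i * w i))"
    using herm_cnj[OF assms] by (intro sum.cong refl) (simp add: ac_simps)
  also have "\<dots> = Q" unfolding Q_def by (rule sum.swap)
  finally have "cnj Q = Q" .
  then have "Im (cnj Q) = Im Q" by simp
  then show ?thesis unfolding Q_def[symmetric] by simp
qed

lemma apply_res:
  assumes "isres H F z G" "i \<in> F" "finite F"
  shows "(\<Sum>l\<in>F. (H i l - (if i = l then z else 0)) * (\<Sum>m\<in>F. G l m * x m)) = x i"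
proof -
  have "(\<Sum>l\<in>F. (H i l - (if i = l then z else 0)) * (\<Sum>m\<in>F. G l m * x m))
      = (\<Sum>l\<in>F. \<Sum>m\<in>F. (H i l - (if i = l then z else 0)) * G l m * x m)"
    by (simp add: sum_distrib_left mult.assoc)
  also have "\<dots> = (\<Sum>m\<in>F. \<Sum>l\<in>F. (H i l - (if i = l then z else 0)) * G l m * x m)"
    by (rule sum.swap)
  also have "\<dots> = (\<Sum>m\<in>F. (\<Sum>l\<in>F. (H i l - (if i = l then z else 0)) * G l m) * x m)"
    by (simp add: sum_distrib_right)
  also have "\<dots> = (\<Sum>m\<in>F. (if i = m then 1 else 0) * x m)"
    using assms(1,2) unfolding isres_def by (intro sum.cong refl) auto
  also have "\<dots> = (\<Sum>m\<in>F. if i = m then x m else 0)" by (intro sum.cong) auto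
  also have "\<dots> = x i" using assms(2,3) by simp
  finally show ?thesis .
qed

lemma Mdelta:
  fixes H :: "nat \<Rightarrow> nat \<Rightarrow> complex" and z :: complex and w :: "nat \<Rightarrow> complex"
  assumes "finite F" "i \<in> F"
  shows "(\<Sum>l\<in>F. (H i l - (if i = l then z else 0)) * w l) = (\<Sum>l\<in>F. H i l * w l) - z * w i"
proof -
  have "(\<Sum>l\<in>F. (H i l - (if i = l then z else 0)) * w l) = (\<Sum>l\<in>F. H i l * w l - (if i = l then z * w l else 0))"
    by (intro sum.cong refl) (auto simp: left_diff_distrib)
  also have "\<dots> = (\<Sum>l\<in>F. H i l * w l) - z * w i" using assms by (simp add: sum_subtractf)
  finally show ?thesis .
qed

lemma sumsq_zero:
  assumes "finite I" "(\<Sum>i\<in>I. (cmod (w i))^2) = 0" "i \<in> I"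
  shows "w i = 0"
  using assms sum_nonneg_eq_0_iff[of I "\<lambda>i. (cmod (w i))^2"] by auto

lemma cnj_mult_self: "cnj x * x = complex_of_real ((cmod x)^2)"
  by (metis complex_norm_square mult.commute)

lemma uniq:
  assumes fin: "finite I" and h: "herm_on H I" and iz: "Im z > 0"
    and g1: "isres H I z G1" and g2: "isres H I z G2"
  shows "G1 = G2"
proof (intro ext)
  fix a k
  show "G1 a k = G2 a k"
  proof (cases "a \<in> I \<and> k \<in> I")
    case False then show ?thesis using g1 g2 unfolding isres_def by auto
  next
    case True
    then have aI: "a \<in> I" and kI: "k \<in> I" by auto
    define w where "w = (\<lambda>l. G1 l k - G2 l k)"
    have hw: "(\<Sum>l\<in>I. H i l * w l) - z * w i = 0" if iI: "i \<in> I" for i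
    proof -
      have "(\<Sum>l\<in>I. (H i l - (if i = l then z else 0)) * w l)
          = (\<Sum>l\<in>I. (H i l - (if i = l then z else 0)) * G1 l k) - (\<Sum>l\<in>I. (H i l - (if i = l then z else 0)) * G2 l k)"
        unfolding w_def by (simp only: right_diff_distrib sum_subtractf)
      also have "\<dots> = 0" using g1 g2 iI kI unfolding isres_def by simp
      finally show ?thesis using Mdelta[OF fin iI, of H z w] by simp
    qed
    have "0 = (\<Sum>i\<in>I. cnj (w i) * ((\<Sum>l\<in>I. H i l * w l) - z * w i))" using hw by simp
    also have "\<dots> = (\<Sum>i\<in>I. \<Sum>l\<in>I. cnj (w i) * (H i l * w l)) - (\<Sum>i\<in>I. cnj (w i) * (z * w i))"
      by (simp only: right_diff_distrib sum_subtractf sum_distrib_left)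
    also have "(\<Sum>i\<in>I. cnj (w i) * (z * w i)) = z * (\<Sum>i\<in>I. cnj (w i) * w i)"
      by (simp only: sum_distrib_left mult.left_commute)
    also have "(\<Sum>i\<in>I. cnj (w i) * w i) = complex_of_real (\<Sum>i\<in>I. (cmod (w i))^2)"
      by (simp add: cnj_mult_self)
    finally have e: "0 = (\<Sum>i\<in>I. \<Sum>l\<in>I. cnj (w i) * (H i l * w l)) - z * complex_of_real (\<Sum>i\<in>I. (cmod (w i))^2)" .
    have "0 = Im (\<Sum>i\<in>I. \<Sum>l\<in>I. cnj (w i) * (H i l * w l)) - Im z * (\<Sum>i\<in>I. (cmod (w i))^2)"
      using arg_cong[OF e, of Im] by simp
    then have "Im z * (\<Sum>i\<in>I. (cmod (w i))^2) = 0" using quad_real[OF h] by simp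
    then have "(\<Sum>i\<in>I. (cmod (w i))^2) = 0" using iz by simp
    then have "w a = 0" using sumsq_zero[OF fin _ aI] by blast
    then show ?thesis unfolding w_def by simp
  qed
qed

lemma posim:
  assumes fin: "finite I" and h: "herm_on H I" and iz: "Im z > 0" and g: "isres H I z G"
  shows "Im (\<Sum>k\<in>I. \<Sum>l\<in>I. cnj (v k) * G k l * v l) \<ge> 0"
proof -
  define w where "w = (\<lambda>k. \<Sum>m\<in>I. G k m * v m)"
  have vk: "v k = (\<Sum>l\<in>I. H k l * w l) - z * w k" if "k \<in> I" for k
    using apply_res[OF g that fin, of v] Mdelta[OF fin that, of H z w] unfolding w_def by simp
  have "(\<Sum>k\<in>I. \<Sum>l\<in>I. cnj (v k) * G k l * v l) = (\<Sum>k\<in>I. cnj (v k) * w k)"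
    unfolding w_def by (simp add: sum_distrib_left mult.assoc)
  also have "\<dots> = (\<Sum>k\<in>I. cnj ((\<Sum>l\<in>I. H k l * w l) - z * w k) * w k)"
    using vk by (intro sum.cong refl) auto
  also have "\<dots> = (\<Sum>k\<in>I. (\<Sum>l\<in>I. cnj (H k l * w l)) * w k - cnj z * (cnj (w k) * w k))"
    by (intro sum.cong refl) (simp add: left_diff_distrib mult.assoc)
  also have "\<dots> = (\<Sum>k\<in>I. \<Sum>l\<in>I. cnj (H k l) * cnj (w l) * w k) - cnj z * (\<Sum>k\<in>I. cnj (w k) * w k)"
    by (simp only: sum_subtractf sum_distrib_left sum_distrib_right complex_cnj_mult)
  also have "(\<Sum>k\<in>I. \<Sum>l\<in>I. cnj (H k l) * cnj (w l) * w k) = (\<Sum>k\<in>I. \<Sum>l\<in>I. cnj (w l) * (H l k * w k))"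
    using herm_cnj[OF h] by (intro sum.cong refl) (simp add: ac_simps)
  also have "\<dots> = (\<Sum>l\<in>I. \<Sum>k\<in>I. cnj (w l) * (H l k * w k))" by (rule sum.swap)
  also have "(\<Sum>k\<in>I. cnj (w k) * w k) = complex_of_real (\<Sum>i\<in>I. (cmod (w i))^2)"
    by (simp add: cnj_mult_self)
  finally have e: "(\<Sum>k\<in>I. \<Sum>l\<in>I. cnj (v k) * G k l * v l) = (\<Sum>l\<in>I. \<Sum>k\<in>I. cnj (w l) * (H l k * w k)) - cnj z * complex_of_real (\<Sum>i\<in>I. (cmod (w i))^2)" .
  have "Im (\<Sum>k\<in>I. \<Sum>l\<in>I. cnj (v k) * G k l * v l) = Im z * (\<Sum>i\<in>I. (cmod (w i))^2)"
    unfolding e using quad_real[OF h, of w] by simp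
  also have "\<dots> \<ge> 0" using iz by (simp add: sum_nonneg)
  finally show ?thesis by simp
qed

definition cvec where "cvec H F j G' k = (\<Sum>l\<in>F. G' k l * H l j)"
definition rvec where "rvec H F j G' k = (\<Sum>l\<in>F. H j l * G' l k)"
definition dval where "dval H F z j G' = H j j - z - (\<Sum>k\<in>F. \<Sum>l\<in>F. H j k * G' k l * H l j)"
definition schurG :: "(nat \<Rightarrow> nat \<Rightarrow> complex) \<Rightarrow> nat set \<Rightarrow> complex \<Rightarrow> nat \<Rightarrow> (nat \<Rightarrow> nat \<Rightarrow> complex) \<Rightarrow> nat \<Rightarrow> nat \<Rightarrow> complex" where
  "schurG H F z j G' i k = (if i \<in> insert j F \<and> k \<in> insert j F then
     (if i = j \<and> k = j then 1 / dval H F z j G'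
      else if i = j then - (1 / dval H F z j G') * rvec H F j G' k
      else if k = j then - (1 / dval H F z j G') * cvec H F j G' i
      else G' i k + (1 / dval H F z j G') * cvec H F j G' i * rvec H F j G' k) else 0)"

lemma herm_sub: "herm_on H I \<Longrightarrow> F \<subseteq> I \<Longrightarrow> herm_on H F"
  unfolding herm_on_def by blast

lemma dval_im:
  assumes fin: "finite F" and h: "herm_on H (insert j F)" and iz: "Im z > 0" and g: "isres H F z G'"
  shows "Im (dval H F z j G') \<le> - Im z"
proof -
  have hF: "herm_on H F" using herm_sub[OF h] by blast
  have "(\<Sum>k\<in>F. \<Sum>l\<in>F. H j k * G' k l * H l j) = (\<Sum>k\<in>F. \<Sum>l\<in>F. cnj (H k j) * G' k l * H l j)"
    using herm_cnj[OF h] by (intro sum.cong refl) auto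
  moreover have "Im (\<Sum>k\<in>F. \<Sum>l\<in>F. cnj (H k j) * G' k l * H l j) \<ge> 0"
    by (rule posim[OF fin hF iz g])
  moreover have "Im (H j j) = 0"
  proof -
    have "cnj (H j j) = H j j" using herm_cnj[OF h, of j j] by simp
    then have "Im (cnj (H j j)) = Im (H j j)" by simp
    then show ?thesis by simp
  qed
  ultimately show ?thesis unfolding dval_def by simp
qed

lemma dval_nz:
  assumes fin: "finite F" and h: "herm_on H (insert j F)" and iz: "Im z > 0" and g: "isres H F z G'"
  shows "dval H F z j G' \<noteq> 0"
  using dval_im[OF assms] iz by auto

lemma S_eq:
  fixes H G' :: "nat \<Rightarrow> nat \<Rightarrow> complex"
  shows "(\<Sum>l\<in>F. H j l * cvec H F j G' l) = (\<Sum>k\<in>F. \<Sum>l\<in>F. H j k * G' k l * H l j)"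
  unfolding cvec_def by (simp add: sum_distrib_left mult.assoc)

lemma schur_isres:
  assumes fin: "finite F" and jF: "j \<notin> F" and h: "herm_on H (insert j F)" and iz: "Im z > 0"
    and g: "isres H F z G'"
  shows "isres H (insert j F) z (schurG H F z j G')"
proof -
  define d where "d = dval H F z j G'"
  define c where "c = cvec H F j G'"
  define r where "r = rvec H F j G'"
  define S where "S = (\<Sum>k\<in>F. \<Sum>l\<in>F. H j k * G' k l * H l j)"
  define M where "M = (\<lambda>i l. H i l - (if i = l then z else (0::complex)))"
  have dnz: "d \<noteq> 0" unfolding d_def by (rule dval_nz[OF fin h iz g])
  have dS: "d = H j j - z - S" unfolding d_def S_def dval_def ..
  have Sc: "(\<Sum>l\<in>F. H j l * c l) = S" unfolding c_def S_def by (rule S_eq)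
  have rdef: "(\<Sum>l\<in>F. H j l * G' l k) = r k" for k unfolding r_def rvec_def ..
  have Mc: "(\<Sum>l\<in>F. M i l * c l) = H i j" if "i \<in> F" for i
    unfolding M_def c_def cvec_def using apply_res[OF g that fin, of "\<lambda>m. H m j"] .
  have MG: "(\<Sum>l\<in>F. M i l * G' l k) = (if i = k then 1 else 0)" if "i \<in> F" "k \<in> F" for i k
    using g that unfolding isres_def M_def by auto
  have Mj: "M j l = H j l" if "l \<in> F" for l using that jF unfolding M_def by auto
  have Mj': "M i j = H i j" if "i \<in> F" for i using that jF unfolding M_def by auto
  define SG where "SG = schurG H F z j G'"
  have SGjj: "SG j j = 1/d" unfolding SG_def schurG_def d_def by simp
  have SGjk: "SG j k = - (1/d) * r k" if "k \<in> F" for k using that jF unfolding SG_def schurG_def d_def r_def by auto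
  have SGkj: "SG k j = - (1/d) * c k" if "k \<in> F" for k using that jF unfolding SG_def schurG_def d_def c_def by auto
  have SGik: "SG i k = G' i k + (1/d) * c i * r k" if "i \<in> F" "k \<in> F" for i k
    using that jF unfolding SG_def schurG_def d_def c_def r_def by auto
  have main: "(\<Sum>l\<in>insert j F. M i l * SG l k) = (if i = k then 1 else 0)" if i: "i \<in> insert j F" and k: "k \<in> insert j F" for i k
  proof -
    have split: "(\<Sum>l\<in>insert j F. M i l * SG l k) = M i j * SG j k + (\<Sum>l\<in>F. M i l * SG l k)"
      using fin jF by simp
    consider "i = j" "k = j" | "i = j" "k \<in> F" | "i \<in> F" "k = j" | "i \<in> F" "k \<in> F" using i k by auto
    then show ?thesis
    proof cases
      case 1
      have "(\<Sum>l\<in>F. M i l * SG l k) = (\<Sum>l\<in>F. - (1/d) * (H j l * c l))"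
        using 1 Mj SGkj by (intro sum.cong refl) (simp add: algebra_simps)
      also have "\<dots> = - (1/d) * S" by (simp only: sum_distrib_left[symmetric] Sc)
      finally have "(\<Sum>l\<in>insert j F. M i l * SG l k) = (H j j - z) * (1/d) - (1/d) * S"
        using split 1 SGjj unfolding M_def by simp
      also have "\<dots> = (1/d) * (H j j - z - S)" by (simp add: algebra_simps add_divide_distrib diff_divide_distrib)
      also have "\<dots> = 1" using dnz dS by simp
      finally show ?thesis using 1 by simp
    next
      case 2
      have kj: "k \<noteq> j" using 2 jF by auto
      have "(\<Sum>l\<in>F. M i l * SG l k) = (\<Sum>l\<in>F. H j l * G' l k + (1/d) * r k * (H j l * c l))"
        using 2 Mj SGik by (intro sum.cong refl) (simp add: algebra_simps)
      also have "\<dots> = r k + (1/d) * r k * S" by (simp only: sum.distrib sum_distrib_left[symmetric] Sc rdef)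
      finally have "(\<Sum>l\<in>insert j F. M i l * SG l k) = (H j j - z) * (- (1/d) * r k) + (r k + (1/d) * r k * S)"
        using split 2 SGjk unfolding M_def by simp
      also have "\<dots> = r k * (1 - (1/d) * (H j j - z - S))" by (simp add: algebra_simps add_divide_distrib diff_divide_distrib)
      also have "\<dots> = 0" using dnz dS by simp
      finally show ?thesis using kj 2 by simp
    next
      case 3
      have ij: "i \<noteq> j" using 3 jF by auto
      have "(\<Sum>l\<in>F. M i l * SG l k) = (\<Sum>l\<in>F. - (1/d) * (M i l * c l))"
        using 3 SGkj by (intro sum.cong refl) (simp add: algebra_simps)
      also have "\<dots> = - (1/d) * H i j" by (simp only: sum_distrib_left[symmetric] Mc[OF 3(1)])
      finally have "(\<Sum>l\<in>insert j F. M i l * SG l k) = H i j * (1/d) - (1/d) * H i j"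
        using split 3 SGjj Mj'[OF 3(1)] by simp
      then show ?thesis using ij 3 by simp
    next
      case 4
      have "(\<Sum>l\<in>F. M i l * SG l k) = (\<Sum>l\<in>F. M i l * G' l k + (1/d) * r k * (M i l * c l))"
        using 4 SGik by (intro sum.cong refl) (simp add: algebra_simps)
      also have "\<dots> = (if i = k then 1 else 0) + (1/d) * r k * H i j"
        by (simp only: sum.distrib sum_distrib_left[symmetric] Mc[OF 4(1)] MG[OF 4])
      finally have "(\<Sum>l\<in>insert j F. M i l * SG l k) = H i j * (- (1/d) * r k) + ((if i = k then 1 else 0) + (1/d) * r k * H i j)"
        using split 4 SGjk[OF 4(2)] Mj'[OF 4(1)] by simp
      then show ?thesis by (simp add: algebra_simps)
    qed
  qed
  show ?thesis unfolding isres_def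
  proof (intro conjI ballI allI impI)
    fix i k assume "i \<in> insert j F" "k \<in> insert j F"
    then show "(\<Sum>l\<in>insert j F. (H i l - (if i = l then z else 0)) * schurG H F z j G' l k) = (if i = k then 1 else 0)"
      using main unfolding M_def SG_def by blast
  next
    fix i k assume "i \<notin> insert j F \<or> k \<notin> insert j F"
    then show "schurG H F z j G' i k = 0" unfolding schurG_def by auto
  qed
qed

lemma exists_res:
  assumes "finite I" "herm_on H I" "Im z > 0"
  shows "\<exists>G. isres H I z G"
  using assms
proof (induction I rule: finite_induct)
  case empty
  show ?case by (rule exI[of _ "\<lambda>_ _. 0"]) (simp add: isres_def)
next
  case (insert j F)
  then obtain G' where "isres H F z G'" using herm_sub[of H "insert j F" F] by blast
  then show ?case using schur_isres[OF insert(1,2,4,5)] by blast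
qed

lemma res_isres:
  assumes "finite I" "herm_on H I" "Im z > 0"
  shows "isres H I z (resolvent_on H I z)"
proof -
  have "\<exists>!G. isres H I z G" using exists_res[OF assms] uniq[OF assms] by blast
  then show ?thesis unfolding resolvent_on_isres by (rule theI')
qed

lemma herm_N: "hermitian_mat N H \<Longrightarrow> herm_on H {..<N}"
  unfolding herm_on_def
proof (intro ballI)
  fix i k assume h: "hermitian_mat N H" and "i \<in> {..<N}" "k \<in> {..<N}"
  then have "i < N" "k < N" by simp_all
  moreover have "\<forall>i<N. \<forall>k<N. H k i = cnj (H i k)" using h unfolding hermitian_mat_def .
  ultimately show "H k i = cnj (H i k)" by blast
qed

lemma res_schur:
  assumes h: "hermitian_mat N H" and iz: "Im z > 0" and jN: "j < N"
  shows "res N H z = schurG H ({..<N} - {j}) z j (res_minor N H j z)"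
    "isres H ({..<N} - {j}) z (res_minor N H j z)"
proof -
  define I where "I = {..<N} - {j}"
  have hN: "herm_on H {..<N}" using herm_N[OF h] .
  have ins: "insert j I = {..<N}" unfolding I_def using jN by auto
  have hI: "herm_on H I" by (rule herm_sub[OF hN]) (auto simp: I_def)
  have finI: "finite I" unfolding I_def by simp
  have gm: "isres H I z (res_minor N H j z)" unfolding res_minor_def I_def[symmetric]
    by (rule res_isres[OF finI hI iz])
  then show "isres H ({..<N} - {j}) z (res_minor N H j z)" unfolding I_def .
  have jI: "j \<notin> I" unfolding I_def by simp
  have hI': "herm_on H (insert j I)" unfolding ins by (rule hN)
  have s0: "isres H (insert j I) z (schurG H I z j (res_minor N H j z))"
    by (rule schur_isres[OF finI jI hI' iz gm])
  then have s: "isres H {..<N} z (schurG H I z j (res_minor N H j z))" unfolding ins .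
  have g: "isres H {..<N} z (res N H z)" unfolding res_def by (rule res_isres[OF _ hN iz]) simp
  have "res N H z = schurG H I z j (res_minor N H j z)" by (rule uniq[OF _ hN iz g s]) simp
  then show "res N H z = schurG H ({..<N} - {j}) z j (res_minor N H j z)" unfolding I_def .
qed

lemma Gjj_facts:
  assumes h: "hermitian_mat N H" and iz: "Im z > 0" and jN: "j < N"
  shows "res N H z j j = 1 / dval H ({..<N} - {j}) z j (res_minor N H j z)"
    "Im (res N H z j j) > 0"
    "res N H z j j \<noteq> 0"
proof -
  define I where "I = {..<N} - {j}"
  define d where "d = dval H I z j (res_minor N H j z)"
  have hN: "herm_on H {..<N}" using herm_N[OF h] .
  have ins: "insert j I = {..<N}" unfolding I_def using jN by auto
  have "res N H z j j = 1 / d" using res_schur[OF assms] jN unfolding schurG_def d_def I_def by simp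
  then show "res N H z j j = 1 / dval H ({..<N} - {j}) z j (res_minor N H j z)" unfolding d_def I_def .
  have gm: "isres H I z (res_minor N H j z)" using res_schur(2)[OF assms] unfolding I_def .
  have hI': "herm_on H (insert j I)" using hN ins by simp
  have dim: "Im d \<le> - Im z" unfolding d_def by (rule dval_im[OF _ hI' iz gm]) (simp add: I_def)
  then have dnz: "d \<noteq> 0" using iz by auto
  have "Im (1 / d) = - Im d / (cmod d)^2" by (simp add: Im_divide')
  moreover have "(cmod d)^2 > 0" using dnz by simp
  moreover have "Im d < 0" using dim iz by simp
  ultimately have "Im (1/d) > 0" by (simp add: divide_neg_pos)
  then show "Im (res N H z j j) > 0" using \<open>res N H z j j = 1 / d\<close> by simp
  then show "res N H z j j \<noteq> 0" by auto
qed

lemma Upsilon_eq: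
  assumes h: "hermitian_mat N H" and iz: "Im z > 0" and jN: "j < N"
  shows "Upsilon N H z j = - z - 1 / res N H z j j - stieltjes N H z"
proof -
  define I where "I = {..<N} - {j}"
  define Gm where "Gm = res_minor N H j z"
  define G where "G = res N H z"
  define d where "d = dval H I z j Gm"
  define c where "c = cvec H I j Gm"
  define r where "r = rvec H I j Gm"
  define g where "g = 1 / d"
  have ins: "{..<N} = insert j I" unfolding I_def using jN by auto
  have jI: "j \<notin> I" and finI: "finite I" unfolding I_def by auto
  have Gs: "G = schurG H I z j Gm" unfolding G_def Gm_def I_def by (rule res_schur[OF assms])
  have gjj: "G j j = g" unfolding Gs schurG_def g_def d_def by simp
  have gnz: "g \<noteq> 0" using Gjj_facts(3)[OF assms] gjj unfolding G_def by simp
  have Gkk: "G k k - Gm k k = G j k * G k j / G j j" if "k \<in> I" for k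
  proof -
    have "G k k = Gm k k + g * c k * r k" "G j k = - g * r k" "G k j = - g * c k"
      using that jI unfolding Gs schurG_def g_def d_def c_def r_def by auto
    then show ?thesis using gjj gnz by (simp add: field_simps power2_eq_square)
  qed
  define m where "m = stieltjes N H z"
  have Nnz: "of_nat N \<noteq> (0::complex)" using jN by simp
  have sumGG: "(\<Sum>k<N. G j k * G k j) = G j j * (\<Sum>k<N. G k k) - G j j * (\<Sum>k\<in>I. Gm k k)"
  proof -
    have "(\<Sum>k<N. G j k * G k j) = G j j * G j j + (\<Sum>k\<in>I. G j k * G k j)"
      unfolding lessThan_def[symmetric] ins using jI finI by simp
    also have "(\<Sum>k\<in>I. G j k * G k j) = (\<Sum>k\<in>I. G j j * (G k k - Gm k k))"
      using Gkk gnz gjj by (intro sum.cong refl) (simp add: field_simps)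
    also have "\<dots> = G j j * (\<Sum>k\<in>I. G k k) - G j j * (\<Sum>k\<in>I. Gm k k)"
      by (simp add: sum_distrib_left right_diff_distrib sum_subtractf)
    also have "(\<Sum>k<N. G k k) = G j j + (\<Sum>k\<in>I. G k k)"
      unfolding lessThan_def[symmetric] ins using jI finI by simp
    ultimately show ?thesis by (simp add: algebra_simps)
  qed
  have mdef: "m = (1 / of_nat N) * (\<Sum>k<N. G k k)" unfolding m_def stieltjes_def G_def ..
  have dG: "1 / G j j = H j j - z - (\<Sum>k\<in>I. \<Sum>l\<in>I. H j k * Gm k l * H l j)"
    unfolding gjj g_def d_def dval_def by simp
  have "Upsilon N H z j = - H j j - (1 / G j j) * ((1 / of_nat N) * (\<Sum>k<N. G j k * G k j))
      + (\<Sum>k\<in>I. \<Sum>l\<in>I. H j k * Gm k l * H l j) - (1 / of_nat N) * (\<Sum>k\<in>I. Gm k k)"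
    unfolding Upsilon_def G_def Gm_def I_def ..
  also have "(1 / G j j) * ((1 / of_nat N) * (\<Sum>k<N. G j k * G k j)) = m - (1 / of_nat N) * (\<Sum>k\<in>I. Gm k k)"
    unfolding sumGG mdef using gnz gjj Nnz by (simp add: field_simps)
  finally have "Upsilon N H z j = - H j j + (\<Sum>k\<in>I. \<Sum>l\<in>I. H j k * Gm k l * H l j) - m" by simp
  also have "\<dots> = - z - 1 / G j j - m" unfolding dG by simp
  finally show ?thesis unfolding G_def m_def .
qed

lemma R_eq:
  assumes h: "hermitian_mat N H" and iz: "Im z > 0" and N1: "N \<ge> 1"
  shows "R_err N H z = - ((stieltjes N H z)^2 + z * stieltjes N H z + 1)"
proof -
  define m where "m = stieltjes N H z"
  define G where "G = res N H z"
  have Nnz: "of_nat N \<noteq> (0::complex)" using N1 by simp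
  have "(\<Sum>j<N. Upsilon N H z j * res N H z j j) = (\<Sum>j<N. (- z - 1 / G j j - m) * G j j)"
    unfolding G_def m_def using Upsilon_eq[OF h iz] by (intro sum.cong refl) simp
  then have "R_err N H z = (1 / of_nat N) * (\<Sum>j<N. (- z - 1 / G j j - m) * G j j)"
    unfolding R_err_def by simp
  also have "(\<Sum>j<N. (- z - 1 / G j j - m) * G j j) = (\<Sum>j<N. - (z + m) * G j j - 1)"
    using Gjj_facts(3)[OF h iz] unfolding G_def by (intro sum.cong refl) (simp add: field_simps)
  also have "\<dots> = - (z + m) * (\<Sum>j<N. G j j) - of_nat N"
    by (simp add: sum_subtractf sum_distrib_left)
  finally have "R_err N H z = (1 / of_nat N) * (- (z + m) * (\<Sum>j<N. G j j) - of_nat N)" .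
  moreover have "m = (1 / of_nat N) * (\<Sum>j<N. G j j)" unfolding m_def stieltjes_def G_def ..
  then have T: "(\<Sum>j<N. G j j) = of_nat N * m" using Nnz by simp
  have "(1 / of_nat N) * (- (z + m) * (of_nat N * m) - of_nat N) = - (z + m) * m - (1::complex)"
    using Nnz by (simp add: field_simps)
  ultimately have "R_err N H z = - (z + m) * m - 1" unfolding T by simp
  then show ?thesis unfolding m_def power2_eq_square by algebra
qed

lemma Im_stieltjes:
  assumes h: "hermitian_mat N H" and iz: "Im z > 0" and N1: "N \<ge> 1"
  shows "Im (stieltjes N H z) > 0"
proof -
  have "Im (\<Sum>j<N. res N H z j j) = (\<Sum>j<N. Im (res N H z j j))" by (simp add: Im_sum)
  also have "\<dots> > 0" using Gjj_facts(2)[OF h iz] N1 by (intro sum_pos) (auto simp: lessThan_empty_iff)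
  finally have p: "Im (\<Sum>j<N. res N H z j j) > 0" .
  have "stieltjes N H z = complex_of_real (1 / real N) * (\<Sum>j<N. res N H z j j)"
    unfolding stieltjes_def by simp
  then have "Im (stieltjes N H z) = (1 / real N) * Im (\<Sum>j<N. res N H z j j)"
    by (simp del: Im_sum)
  then show ?thesis using p N1 by simp
qed

theorem proposition2p2:
  shows "\<exists>C>0. \<forall>(N::nat) (H::nat \<Rightarrow> nat \<Rightarrow> complex) (z::complex).
     N \<ge> 1 \<and> hermitian_mat N H \<and> Im z > 0 \<longrightarrow>
       (\<bar>Re z\<bar> \<le> 2 + Im z \<longrightarrow>
          cmod (Lambda N H z) \<le> C * min (cmod (R_err N H z) / cmod ((m_sc z)^2 - 1)) (sqrt (cmod (R_err N H z))))
     \<and> \<bar>Im (Lambda N H z)\<bar> \<le> C * min (cmod (R_err N H z) / cmod ((m_sc z)^2 - 1)) (sqrt (cmod (R_err N H z)))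
     \<and> min (cmod (Lambda N H z)) (cmod (Lambda N H z + 2 * m_sc z + z)) \<le> C * sqrt (cmod (R_err N H z))"
proof (intro exI[of _ "8::real"] conjI allI impI)
  show "(0::real) < 8" by simp
next
  fix N :: nat and H :: "nat \<Rightarrow> nat \<Rightarrow> complex" and z :: complex
  assume a: "N \<ge> 1 \<and> hermitian_mat N H \<and> Im z > 0"
  then have N1: "N \<ge> 1" and h: "hermitian_mat N H" and iz: "Im z > 0" by auto
  have q: "(m_sc z)^2 + z * m_sc z + 1 = 0" and s1: "cmod (m_sc z) < 1" and ims: "Im (m_sc z) > 0"
    using msc_props[OF iz] by auto
  have imm: "Im (stieltjes N H z) > 0" by (rule Im_stieltjes[OF h iz N1])
  have R: "R_err N H z = - ((stieltjes N H z)^2 + z * stieltjes N H z + 1)" by (rule R_eq[OF h iz N1])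
  have L: "Lambda N H z = stieltjes N H z - m_sc z" unfolding Lambda_def ..
  note F = final_ineq[OF iz q s1 ims imm]
  show "\<bar>Re z\<bar> \<le> 2 + Im z \<Longrightarrow> cmod (Lambda N H z) \<le> 8 * min (cmod (R_err N H z) / cmod ((m_sc z)^2 - 1)) (sqrt (cmod (R_err N H z)))"
    using F unfolding R L by blast
  show "\<bar>Im (Lambda N H z)\<bar> \<le> 8 * min (cmod (R_err N H z) / cmod ((m_sc z)^2 - 1)) (sqrt (cmod (R_err N H z)))"
    using F unfolding R L by blast
  show "min (cmod (Lambda N H z)) (cmod (Lambda N H z + 2 * m_sc z + z)) \<le> 8 * sqrt (cmod (R_err N H z))"
    using F unfolding R L by blast
qed

end
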